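(* Let $x_1,\dots,x_N\in\mathbb{R}^D$ be $N\ge 2$ pairwise distinct points, and let $x_1',\dots,x_N'\in\mathbb{R}^D$ satisfy $\|x_n-x_n'\|\le\varepsilon$ for all $n=1,\dots,N$, where $\|\cdot\|$ is the Euclidean norm and $$\varepsilon\le \tfrac12\min_{n_1\neq n_2}\|x_{n_1}-x_{n_2}\|.$$ Then for every integer $K\ge 1$ and every choice of indices $n_1,\dots,n_K\in\{1,\dots,N\}$, with the cyclic convention $n_{K+1}:=n_1$, $$\sum_{k=1}^{K}\tfrac12\|x_{n_k}-x_{n_k}'\|^2\;\le\;\sum_{k=1}^{K}\tfrac12\|x_{n_k}-x_{n_{k+1}}'\|^2 .$$ That is, the set $\{(x_1,x_1'),\dots,(x_N,x_N')\}$ (equivalently, the map $x_n\mapsto x_n'$) is $c$-cyclically monotone for the quadratic cost $c(x,y)=\tfrac12\|x-y\|^2$.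
   Context: A set of pairs $\{(x_n,y_n)\}_{n=1}^N$ (or the map $x_n\mapsto y_n$) is called $c$-cyclically monotone for a cost function $c$ if for every $K\ge1$ and all indices $n_1,\dots,n_K$ (with $n_{K+1}:=n_1$) one has $\sum_{k=1}^K c(x_{n_k},y_{n_k})\le\sum_{k=1}^K c(x_{n_k},y_{n_{k+1}})$. *)

theory Defs
  imports "HOL-Analysis.Analysis"
begin

definition cyclically_monotone ::
  "('a \<Rightarrow> 'b \<Rightarrow> real) \<Rightarrow> nat \<Rightarrow> (nat \<Rightarrow> 'a) \<Rightarrow> (nat \<Rightarrow> 'b) \<Rightarrow> bool" where
  "cyclically_monotone c N x y \<longleftrightarrow>
     (\<forall>K::nat. \<forall>ns::nat \<Rightarrow> nat. K \<ge> 1 \<longrightarrow> (\<forall>k\<in>{1..K}. ns k \<in> {1..N}) \<longrightarrow>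
        (\<Sum>k=1..K. c (x (ns k)) (y (ns k)))
          \<le> (\<Sum>k=1..K. c (x (ns k)) (y (ns (if k = K then 1 else Suc k)))))"

definition quad_cost :: "'a::real_normed_vector \<Rightarrow> 'a \<Rightarrow> real" where
  "quad_cost u v = (1/2) * (norm (u - v))\<^sup>2"

end

theory Submission
  imports Defs
begin

theorem mainTheorem1:
  fixes x x' :: "nat \<Rightarrow> real ^ 'D" and N :: nat and \<epsilon> :: real
  assumes "N \<ge> 2"
    and "\<forall>i\<in>{1..N}. \<forall>j\<in>{1..N}. i \<noteq> j \<longrightarrow> x i \<noteq> x j"
    and "\<forall>n\<in>{1..N}. norm (x n - x' n) \<le> \<epsilon>"
    and "\<epsilon> \<le> (1/2) * Min {norm (x i - x j) | i j. i \<in> {1..N} \<and> j \<in> {1..N} \<and> i \<noteq> j}"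
  shows "cyclically_monotone quad_cost N x x'"
proof -
  let ?S = "{norm (x i - x j) | i j. i \<in> {1..N} \<and> j \<in> {1..N} \<and> i \<noteq> j}"
  have fin: "finite ?S"
  proof (rule finite_subset)
    show "?S \<subseteq> (\<lambda>(i,j). norm (x i - x j)) ` ({1..N}\<times>{1..N})" by force
  qed auto
  have key: "quad_cost (x a) (x' a) \<le> quad_cost (x a) (x' b)"
    if a: "a \<in> {1..N}" and b: "b \<in> {1..N}" for a b
  proof (cases "a = b")
    case True then show ?thesis by simp
  next
    case False
    have "norm (x a - x b) \<in> ?S" using a b False by blast
    then have m: "Min ?S \<le> norm (x a - x b)" using fin by simp
    have tri: "norm (x a - x b) \<le> norm (x a - x' b) + norm (x b - x' b)"
      using norm_triangle_ineq4[of "x a - x' b" "x b - x' b"] by (simp add: algebra_simps)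
    have e1: "norm (x a - x' a) \<le> \<epsilon>" "norm (x b - x' b) \<le> \<epsilon>" using assms(3) a b by auto
    have "norm (x a - x' a) \<le> norm (x a - x' b)" using m tri e1 assms(4) by linarith
    then have "(norm (x a - x' a))\<^sup>2 \<le> (norm (x a - x' b))\<^sup>2"
      by (simp add: power_mono)
    then show ?thesis unfolding quad_cost_def by simp
  qed
  show ?thesis unfolding cyclically_monotone_def
  proof (intro allI impI)
    fix K :: nat and ns :: "nat \<Rightarrow> nat"
    assume K: "1 \<le> K" and ns: "\<forall>k\<in>{1..K}. ns k \<in> {1..N}"
    show "(\<Sum>k=1..K. quad_cost (x (ns k)) (x' (ns k)))
          \<le> (\<Sum>k=1..K. quad_cost (x (ns k)) (x' (ns (if k = K then 1 else Suc k))))"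
    proof (rule sum_mono)
      fix k assume k: "k \<in> {1..K}"
      have "ns (if k = K then 1 else Suc k) \<in> {1..N}" using ns k K by auto
      then show "quad_cost (x (ns k)) (x' (ns k)) \<le> quad_cost (x (ns k)) (x' (ns (if k = K then 1 else Suc k)))"
        using key ns k by blast
    qed
  qed
qed

end
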